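(* Let $N \geq 1$ and let $\mu$ be the uniform probability measure on the discrete torus $\mathbb{Z}/(N\mathbb{Z})$. For every probability measure $\nu$ on $\mathbb{Z}/(N\mathbb{Z})$, $$H(\nu|\mu) \leq \sqrt{2}\, W_c(\nu,\mu)\sqrt{I(\nu|\mu)}.$$
   Context: The relative entropy is $H(\nu|\mu) = \sum_{x\in\mathbb{Z}/(N\mathbb{Z})}\nu(x)(\log\nu(x)+\log N)$ (with $0\log 0=0$). The Fisher information is $$I(\nu|\mu) = \sum_{x\in\mathbb{Z}/(N\mathbb{Z})}\big(\log\nu(x+1)-\log\nu(x)\big)\big(\nu(x+1)-\nu(x)\big),$$ (taking the value $+\infty$ if some term is infinite). The transport cost $W_c$ is defined by $$W_c(\nu,\mu)^2 = \inf_{X\sim\nu,\,Y\sim\mu}\mathbb{E}\big[d(X,Y)+d(X,Y)^2\big],$$ with $W_c \geq 0$, where the infimum is over all couplings of $X\sim\nu$ and $Y\sim\mu$, and $d$ is the graph distance on the cycle $\mathbb{Z}/(N\mathbb{Z})$. *)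

theory Defs
  imports "HOL-Analysis.Analysis"
begin

text \<open>The discrete torus Z/NZ is represented by the points 0..N-1 (type nat);
  a probability measure nu on it is a function nat => real, nonnegative on
  {0..<N} with total mass 1 (values outside {0..<N} are irrelevant).\<close>

definition torus_dist :: "nat \<Rightarrow> nat \<Rightarrow> nat \<Rightarrow> nat" where
  "torus_dist N x y = (let k = (x + N - y) mod N in min k (N - k))"

definition is_prob :: "nat \<Rightarrow> (nat \<Rightarrow> real) \<Rightarrow> bool" where
  "is_prob N \<nu> \<longleftrightarrow> (\<forall>x<N. 0 \<le> \<nu> x) \<and> (\<Sum>x<N. \<nu> x) = 1"

text \<open>Relative entropy with respect to the uniform measure (0 log 0 = 0).\<close>
definition rel_entropy :: "nat \<Rightarrow> (nat \<Rightarrow> real) \<Rightarrow> real" where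
  "rel_entropy N \<nu> = (\<Sum>x<N. if \<nu> x = 0 then 0 else \<nu> x * (ln (\<nu> x) + ln (real N)))"

text \<open>Fisher information, with value +infinity if some term is infinite, i.e. if
  exactly one of nu(x), nu(x+1) vanishes. Terms with both values zero are 0.\<close>
definition fisher_info :: "nat \<Rightarrow> (nat \<Rightarrow> real) \<Rightarrow> ereal" where
  "fisher_info N \<nu> =
     (if \<exists>x<N. (\<nu> x = 0) \<noteq> (\<nu> ((x + 1) mod N) = 0) then \<infinity>
      else ereal (\<Sum>x<N. if \<nu> x = 0 then 0 else
              (ln (\<nu> ((x + 1) mod N)) - ln (\<nu> x)) * (\<nu> ((x + 1) mod N) - \<nu> x)))"

definition is_coupling :: "nat \<Rightarrow> (nat \<Rightarrow> real) \<Rightarrow> (nat \<Rightarrow> nat \<Rightarrow> real) \<Rightarrow> bool" where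
  "is_coupling N \<nu> \<pi> \<longleftrightarrow>
     (\<forall>x<N. \<forall>y<N. 0 \<le> \<pi> x y) \<and>
     (\<forall>x<N. (\<Sum>y<N. \<pi> x y) = \<nu> x) \<and>
     (\<forall>y<N. (\<Sum>x<N. \<pi> x y) = 1 / real N)"

definition Wc :: "nat \<Rightarrow> (nat \<Rightarrow> real) \<Rightarrow> real" where
  "Wc N \<nu> = sqrt (Inf {\<Sum>x<N. \<Sum>y<N. \<pi> x y *
        (real (torus_dist N x y) + real (torus_dist N x y) ^ 2) | \<pi>. is_coupling N \<nu> \<pi>})"

end

theory Submission
  imports Defs
begin

definition Gf :: "real \<Rightarrow> real" where "Gf t = (if t \<le> 1 then t else 1 + ln t)"

lemma Gf_ineq: assumes "0 < t" shows "t * ln t \<le> (t - 1) * Gf t"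
proof (cases "t \<le> 1")
  case True
  have "ln t \<le> t - 1" using assms by (rule ln_le_minus_one)
  then have "t * ln t \<le> t * (t - 1)" using assms by (simp add: mult_left_mono)
  then show ?thesis using True by (simp add: Gf_def algebra_simps)
next
  case False
  have "ln t \<le> t - 1" using assms by (rule ln_le_minus_one)
  then show ?thesis using False by (simp add: Gf_def algebra_simps)
qed

lemma Gf_sq_le: assumes a: "0 < a" and b: "a \<le> b"
  shows "(Gf a - Gf b)^2 \<le> (ln a - ln b) * (a - b)"
proof -
  have la: "ln a \<le> a - 1" using a by (rule ln_le_minus_one)
  have lb: "ln b \<le> b - 1" using a b by (intro ln_le_minus_one) auto
  have lab: "ln a \<le> ln b" using a b by simp
  have e1: "ln (a/b) \<le> a/b - 1" using a b by (intro ln_le_minus_one) auto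
  have e2: "ln (b/a) \<le> b/a - 1" using a b by (intro ln_le_minus_one) auto
  have q1: "ln (a/b) = ln a - ln b" using a b by (simp add: ln_div)
  have q2: "ln (b/a) = ln b - ln a" using a b by (simp add: ln_div)
  show ?thesis
  proof (cases "b \<le> 1")
    case True
    have "1 - a/b \<le> ln b - ln a" using e1 q1 by simp
    moreover have "b - a \<le> 1 - a/b"
    proof -
      have "(b - a) * b \<le> (b - a) * 1" using True b by (intro mult_left_mono) auto
      then show ?thesis using a b by (simp add: field_simps)
    qed
    ultimately have h: "b - a \<le> ln b - ln a" by simp
    have "(Gf a - Gf b)^2 = (b - a) * (b - a)" using True b by (simp add: Gf_def power2_eq_square algebra_simps)
    also have "\<dots> \<le> (ln b - ln a) * (b - a)" using h b by (intro mult_right_mono) auto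
    finally show ?thesis by (simp add: algebra_simps)
  next
    case False
    note bF = False
    show ?thesis
    proof (cases "a \<le> 1")
      case True
      define p where "p = 1 - a"
      define q where "q = - ln a"
      define r where "r = ln b"
      define s where "s = b - 1"
      have pq: "p \<le> q" using la by (simp add: p_def q_def)
      have rs: "r \<le> s" using lb by (simp add: r_def s_def)
      have p0: "0 \<le> p" using True by (simp add: p_def)
      have r0: "0 \<le> r" using bF by (simp add: r_def)
      have "(Gf a - Gf b)^2 = (p + r) * (p + r)" using True bF
        by (simp add: Gf_def power2_eq_square p_def r_def algebra_simps)
      also have "\<dots> \<le> (q + r) * (p + s)" using pq rs p0 r0 by (intro mult_mono) auto
      also have "\<dots> = (ln a - ln b) * (a - b)" by (simp add: q_def r_def p_def s_def algebra_simps)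
      finally show ?thesis .
    next
      case False
      have "ln b - ln a \<le> b/a - 1" using e2 q2 by simp
      moreover have "b/a - 1 \<le> b - a"
      proof -
        have "(b - a) * 1 \<le> (b - a) * a" using False b by (intro mult_left_mono) auto
        then show ?thesis using a b by (simp add: field_simps)
      qed
      ultimately have h: "ln b - ln a \<le> b - a" by simp
      have h0: "0 \<le> ln b - ln a" using lab by simp
      have "(Gf a - Gf b)^2 = (ln b - ln a) * (ln b - ln a)" using False bF by (simp add: Gf_def power2_eq_square algebra_simps)
      also have "\<dots> \<le> (ln b - ln a) * (b - a)" using h h0 by (intro mult_left_mono) auto
      finally show ?thesis by (simp add: algebra_simps)
    qed
  qed
qed

lemma Gf_sq: assumes "0 < a" "0 < b" shows "(Gf a - Gf b)^2 \<le> (ln a - ln b) * (a - b)"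
proof (cases "a \<le> b")
  case True then show ?thesis using Gf_sq_le assms by blast
next
  case False
  then have "(Gf b - Gf a)^2 \<le> (ln b - ln a) * (b - a)" using Gf_sq_le assms by simp
  then show ?thesis by (simp add: power2_commute algebra_simps)
qed

lemma pos_sum_tele: assumes l: "0 < l"
  shows "(\<Sum>k<n. max (D - l * (real k + 1)) 0) \<le> (max D 0)^2/(2*l) - (max (D - l * real n) 0)^2/(2*l)"
proof (induction n)
  case 0 then show ?case by simp
next
  case (Suc n)
  have "max (D - l * (real n + 1)) 0 \<le> (max (D - l * real n) 0)^2/(2*l) - (max (D - l * real (Suc n)) 0)^2/(2*l)"
  proof -
    define u where "u = D - l * (real n + 1)"
    have e: "D - l * real n = u + l" "D - l * real (Suc n) = u" by (simp_all add: u_def algebra_simps)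
    have "max u 0 \<le> (max (u + l) 0)^2/(2*l) - (max u 0)^2/(2*l)"
    proof (cases "u \<ge> 0")
      case True
      then show ?thesis using l by (simp add: field_simps power2_eq_square)
    next
      case False
      then show ?thesis using l by (simp add: max_def)
    qed
    then show ?thesis using e u_def by (simp only:)
  qed
  then show ?case using Suc.IH by (simp only: sum.lessThan_Suc)
qed

lemma pos_sum: assumes l: "0 < l"
  shows "(\<Sum>k<n. max (D - l * (real k + 1)) 0) \<le> D^2/(2*l)"
proof -
  have "(max D 0)^2 \<le> D^2" by (simp add: max_def)
  then have "(max D 0)^2/(2*l) \<le> D^2/(2*l)" using l by (simp add: divide_right_mono)
  moreover have "0 \<le> (max (D - l * real n) 0)^2/(2*l)" using l by simp
  ultimately show ?thesis using pos_sum_tele[OF l, of D n] by linarith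
qed

definition ext :: "nat \<Rightarrow> (nat \<Rightarrow> real) \<Rightarrow> int \<Rightarrow> real" where
  "ext N h z = h (nat (z mod int N))"

lemma ext_periodic: "ext N h (z + int N) = ext N h z"
  by (simp add: ext_def)

lemma ext_nat: "y < N \<Longrightarrow> ext N h (int y) = h y"
  by (simp add: ext_def)

lemma ext_suc: "y < N \<Longrightarrow> ext N h (int y + 1) = h ((y + 1) mod N)"
proof -
  assume "y < N"
  have "(int y + 1) mod int N = int ((y + 1) mod N)" by (simp add: zmod_int add.commute)
  then show ?thesis by (simp add: ext_def)
qed

lemma shift_sum:
  fixes H :: "int \<Rightarrow> real"
  assumes per: "\<And>z. H (z + int N) = H z"
  shows "(\<Sum>y<N. H (int y + int c)) = (\<Sum>y<N. H (int y))"
proof (induction c)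
  case 0 then show ?case by simp
next
  case (Suc c)
  define g where "g i = H (int i + int c)" for i
  have a: "(\<Sum>i<Suc N. g i) = g 0 + (\<Sum>i<N. g (Suc i))" by (rule sum.lessThan_Suc_shift)
  have b: "(\<Sum>i<Suc N. g i) = (\<Sum>i<N. g i) + g N" by simp
  have c: "g N = g 0" unfolding g_def using per[of "int c"] by (simp add: add.commute)
  have "(\<Sum>y<N. H (int y + int (Suc c))) = (\<Sum>i<N. g (Suc i))"
    by (simp add: g_def algebra_simps)
  also have "\<dots> = (\<Sum>i<N. g i)" using a b c by simp
  also have "\<dots> = (\<Sum>y<N. H (int y))" using Suc by (simp add: g_def)
  finally show ?case .
qed

lemma tele_fwd: fixes F :: "int \<Rightarrow> real"
  shows "F (z + int d) - F z = (\<Sum>k<d. F (z + int k + 1) - F (z + int k))"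
  by (induction d) (simp_all add: algebra_simps)

lemma tele_bwd: fixes F :: "int \<Rightarrow> real"
  shows "F (z - int d) - F z = (\<Sum>k<d. - (F (z - int k - 1 + 1) - F (z - int k - 1)))"
  by (induction d) (simp_all add: algebra_simps)

lemma gauss_l: "(\<Sum>k<d. l * (real k + 1)) = l * (real d + real d ^ 2) / 2"
  by (induction d) (simp_all add: algebra_simps power2_eq_square)


definition Tb :: "(int \<Rightarrow> real) \<Rightarrow> nat \<Rightarrow> real \<Rightarrow> int \<Rightarrow> real" where
  "Tb F N l y = (\<Sum>k<N. max ((F (y + int k + 1) - F (y + int k)) - l * (real k + 1)) 0
      + max (- (F (y - int k - 1 + 1) - F (y - int k - 1)) - l * (real k + 1)) 0)"

lemma torus_cases:
  assumes "x < N" "y < N"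
  shows "(torus_dist N x y \<le> N \<and> int x mod int N = (int y + int (torus_dist N x y)) mod int N) \<or>
         (torus_dist N x y \<le> N \<and> int x mod int N = (int y - int (torus_dist N x y)) mod int N)"
proof -
  define k where "k = (x + N - y) mod N"
  have kN: "k < N" using assms by (simp add: k_def)
  have kx: "(y + k) mod N = x"
  proof -
    have "(y + k) mod N = (y + (x + N - y)) mod N" by (simp add: k_def mod_add_right_eq)
    also have "y + (x + N - y) = x + N" using assms by simp
    finally show ?thesis using assms by simp
  qed
  then have kx': "int x = (int y + int k) mod int N"
    by (metis of_nat_add zmod_int)
  have d: "torus_dist N x y = min k (N - k)" by (simp add: torus_dist_def k_def Let_def)
  show ?thesis
  proof (cases "k \<le> N - k")
    case True
    then have "torus_dist N x y = k" using d by simp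
    then show ?thesis using kx' kN assms by simp
  next
    case False
    then have e: "torus_dist N x y = N - k" using d by simp
    have "(int y - int (N - k)) mod int N = (int y + int k - int N) mod int N"
      using kN by (simp add: of_nat_diff algebra_simps)
    also have "\<dots> = (int y + int k) mod int N" by (simp add: minus_mod_self2)
    finally show ?thesis using e kx' assms by simp
  qed
qed

lemma pair_bound:
  fixes f :: "nat \<Rightarrow> real"
  assumes "x < N" "y < N" "0 < l"
  defines "F \<equiv> (\<lambda>z. Gf (ext N f z))"
  shows "Gf (f x) - Gf (f y) - l * (real (torus_dist N x y) + real (torus_dist N x y) ^ 2) / 2
        \<le> Tb F N l (int y)"
proof -
  define d where "d = torus_dist N x y"
  have fx: "Gf (f x) = F (int x)" and fy: "Gf (f y) = F (int y)"
    using assms by (simp_all add: F_def ext_nat)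
  have Fmod: "F z = F (z mod int N)" for z by (simp add: F_def ext_def)
  define A where "A k = max ((F (int y + int k + 1) - F (int y + int k)) - l * (real k + 1)) 0" for k
  define B where "B k = max (- (F (int y - int k - 1 + 1) - F (int y - int k - 1)) - l * (real k + 1)) 0" for k
  have A0: "0 \<le> A k" for k by (simp add: A_def)
  have B0: "0 \<le> B k" for k by (simp add: B_def)
  have T: "Tb F N l (int y) = (\<Sum>k<N. A k) + (\<Sum>k<N. B k)"
    by (simp add: Tb_def A_def B_def sum.distrib)
  have g: "l * (real d + real d ^ 2) / 2 = (\<Sum>k<d. l * (real k + 1))" by (simp add: gauss_l)
  from torus_cases[OF assms(1,2)] have "d \<le> N \<and> (F (int x) = F (int y + int d) \<or> F (int x) = F (int y - int d))"
    using Fmod assms unfolding d_def by (metis mod_less of_nat_less_iff of_nat_mod zmod_int)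
  then have dN: "d \<le> N" and cs: "F (int x) = F (int y + int d) \<or> F (int x) = F (int y - int d)" by auto
  show ?thesis
  proof (rule disjE[OF cs])
    assume h: "F (int x) = F (int y + int d)"
    have "F (int x) - F (int y) - l * (real d + real d ^ 2) / 2
        = (\<Sum>k<d. (F (int y + int k + 1) - F (int y + int k)) - l * (real k + 1))"
      using h g tele_fwd[of F "int y" d] by (simp add: sum_subtractf)
    also have "\<dots> \<le> (\<Sum>k<d. A k)" unfolding A_def by (intro sum_mono) simp
    also have "\<dots> \<le> (\<Sum>k<N. A k)" using dN A0 by (intro sum_mono2) auto
    also have "\<dots> \<le> Tb F N l (int y)" using T B0 by (simp add: sum_nonneg)
    finally show ?thesis using fx fy d_def by simp
  next
    assume h: "F (int x) = F (int y - int d)"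
    have "F (int x) - F (int y) - l * (real d + real d ^ 2) / 2
        = (\<Sum>k<d. - (F (int y - int k - 1 + 1) - F (int y - int k - 1)) - l * (real k + 1))"
      using h g tele_bwd[of F "int y" d] by (simp add: sum_subtractf)
    also have "\<dots> \<le> (\<Sum>k<d. B k)" unfolding B_def by (intro sum_mono) simp
    also have "\<dots> \<le> (\<Sum>k<N. B k)" using dN B0 by (intro sum_mono2) auto
    also have "\<dots> \<le> Tb F N l (int y)" using T A0 by (simp add: sum_nonneg)
    finally show ?thesis using fx fy d_def by simp
  qed
qed


lemma sum_Tb:
  fixes F :: "int \<Rightarrow> real"
  assumes per: "\<And>z. F (z + int N) = F z" and l: "0 < l"
  shows "(\<Sum>y<N. Tb F N l (int y)) \<le> (\<Sum>z<N. (F (int z + 1) - F (int z))^2) / (2 * l)"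
proof -
  define Dd where "Dd z = F (z + 1) - F z" for z
  have Dper: "Dd (z + int N) = Dd z" for z using per[of z] per[of "z+1"] by (simp add: Dd_def algebra_simps)
  define c where "c k = l * (real k + 1)" for k :: nat
  define HA where "HA k z = max (Dd z - c k) 0" for k z
  define HB where "HB k z = max (- Dd z - c k) 0" for k z
  have T: "Tb F N l (int y) = (\<Sum>k<N. HA k (int y + int k) + HB k (int y - int k - 1))" for y
    by (simp add: Tb_def HA_def HB_def Dd_def c_def add.assoc)
  have sA: "(\<Sum>y<N. HA k (int y + int k)) = (\<Sum>y<N. HA k (int y))" for k
    by (rule shift_sum) (simp add: HA_def Dper)
  have sB: "(\<Sum>y<N. HB k (int y - int k - 1)) = (\<Sum>y<N. HB k (int y))" if "k < N" for k
  proof -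
    have perB: "HB k (z + int N) = HB k z" for z by (simp add: HB_def Dper)
    have "HB k (int y - int k - 1) = HB k (int y + int (N - 1 - k))" for y
    proof -
      have "HB k (int y - int k - 1) = HB k (int y - int k - 1 + int N)" using perB by simp
      also have "int y - int k - 1 + int N = int y + int (N - 1 - k)" using that by (simp add: of_nat_diff)
      finally show ?thesis .
    qed
    then have "(\<Sum>y<N. HB k (int y - int k - 1)) = (\<Sum>y<N. HB k (int y + int (N - 1 - k)))" by simp
    also have "\<dots> = (\<Sum>y<N. HB k (int y))" by (rule shift_sum) (simp add: perB)
    finally show ?thesis .
  qed
  have "(\<Sum>y<N. Tb F N l (int y)) = (\<Sum>k<N. \<Sum>y<N. HA k (int y + int k) + HB k (int y - int k - 1))"
    unfolding T by (rule sum.swap)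
  also have "\<dots> = (\<Sum>k<N. \<Sum>y<N. HA k (int y) + HB k (int y))"
  proof (rule sum.cong[OF refl])
    fix k assume "k \<in> {..<N}"
    then show "(\<Sum>y<N. HA k (int y + int k) + HB k (int y - int k - 1)) = (\<Sum>y<N. HA k (int y) + HB k (int y))"
      by (simp only: sum.distrib sA sB lessThan_iff)
  qed
  also have "\<dots> = (\<Sum>y<N. \<Sum>k<N. max (\<bar>Dd (int y)\<bar> - l * (real k + 1)) 0)"
  proof -
    have "HA k z + HB k z = max (\<bar>Dd z\<bar> - l * (real k + 1)) 0" for k z
    proof -
      have "0 \<le> c k" using l by (simp add: c_def)
      then show ?thesis by (auto simp: HA_def HB_def c_def max_def abs_if)
    qed
    then show ?thesis by (subst sum.swap) simp
  qed
  also have "\<dots> \<le> (\<Sum>y<N. \<bar>Dd (int y)\<bar>^2 / (2 * l))"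
    by (intro sum_mono pos_sum l)
  also have "\<dots> = (\<Sum>z<N. (F (int z + 1) - F (int z))^2) / (2 * l)"
    by (simp add: Dd_def sum_divide_distrib)
  finally show ?thesis .
qed


lemma per_lambda:
  fixes N :: nat and \<nu> :: "nat \<Rightarrow> real" and \<pi> :: "nat \<Rightarrow> nat \<Rightarrow> real"
  assumes N1: "N \<ge> 1" and pos: "\<And>x. x < N \<Longrightarrow> 0 < \<nu> x"
    and cpl: "is_coupling N \<nu> \<pi>" and l: "0 < l"
  shows "rel_entropy N \<nu> \<le>
     (\<Sum>x<N. if \<nu> x = 0 then 0 else
              (ln (\<nu> ((x + 1) mod N)) - ln (\<nu> x)) * (\<nu> ((x + 1) mod N) - \<nu> x)) / (2 * l)
     + l * (\<Sum>x<N. \<Sum>y<N. \<pi> x y *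
        (real (torus_dist N x y) + real (torus_dist N x y) ^ 2)) / 2"
proof -
  define f where "f x = real N * \<nu> x" for x
  define F where "F = (\<lambda>z. Gf (ext N f z))"
  define c where "c x y = real (torus_dist N x y) + real (torus_dist N x y) ^ 2" for x y
  define Is where "Is = (\<Sum>x<N. (ln (\<nu> ((x + 1) mod N)) - ln (\<nu> x)) * (\<nu> ((x + 1) mod N) - \<nu> x))"
  have Npos: "0 < real N" using N1 by simp
  have fpos: "x < N \<Longrightarrow> 0 < f x" for x using pos Npos by (simp add: f_def)
  have pi0: "x < N \<Longrightarrow> y < N \<Longrightarrow> 0 \<le> \<pi> x y" for x y using cpl by (simp add: is_coupling_def)
  have m1: "x < N \<Longrightarrow> (\<Sum>y<N. \<pi> x y) = \<nu> x" for x using cpl by (simp add: is_coupling_def)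
  have m2: "y < N \<Longrightarrow> (\<Sum>x<N. \<pi> x y) = 1 / real N" for y using cpl by (simp add: is_coupling_def)
  have IsEq: "(\<Sum>x<N. if \<nu> x = 0 then 0 else
              (ln (\<nu> ((x + 1) mod N)) - ln (\<nu> x)) * (\<nu> ((x + 1) mod N) - \<nu> x)) = Is"
    unfolding Is_def using pos by (intro sum.cong refl) (simp add: less_imp_neq[symmetric])
  have "rel_entropy N \<nu> = (\<Sum>x<N. (1 / real N) * (f x * ln (f x)))"
    unfolding rel_entropy_def
  proof (rule sum.cong[OF refl])
    fix x assume "x \<in> {..<N}"
    then have "0 < \<nu> x" using pos by simp
    then show "(if \<nu> x = 0 then 0 else \<nu> x * (ln (\<nu> x) + ln (real N))) = 1 / real N * (f x * ln (f x))"
      using Npos by (simp add: f_def ln_mult algebra_simps)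
  qed
  also have "\<dots> \<le> (\<Sum>x<N. (1 / real N) * ((f x - 1) * Gf (f x)))"
    using Npos fpos Gf_ineq by (intro sum_mono mult_left_mono) auto
  also have "\<dots> = (\<Sum>x<N. \<nu> x * Gf (f x)) - (\<Sum>y<N. (1 / real N) * Gf (f y))"
    using Npos by (simp add: f_def algebra_simps sum_subtractf)
  also have "\<dots> = (\<Sum>x<N. \<Sum>y<N. \<pi> x y * (Gf (f x) - Gf (f y)))"
  proof -
    have a: "(\<Sum>x<N. \<Sum>y<N. \<pi> x y * Gf (f x)) = (\<Sum>x<N. \<nu> x * Gf (f x))"
      by (intro sum.cong refl) (simp add: m1 sum_distrib_right[symmetric])
    have b: "(\<Sum>x<N. \<Sum>y<N. \<pi> x y * Gf (f y)) = (\<Sum>y<N. (1 / real N) * Gf (f y))"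
      by (subst sum.swap) (intro sum.cong refl, simp add: m2 sum_distrib_right[symmetric])
    show ?thesis using a b by (simp add: right_diff_distrib sum_subtractf)
  qed
  also have "\<dots> = (\<Sum>x<N. \<Sum>y<N. \<pi> x y * (Gf (f x) - Gf (f y) - l * c x y / 2))
      + l * (\<Sum>x<N. \<Sum>y<N. \<pi> x y * c x y) / 2"
    by (simp add: sum_distrib_left sum_divide_distrib sum.distrib[symmetric] algebra_simps)
  also have "\<dots> \<le> (\<Sum>x<N. \<Sum>y<N. \<pi> x y * Tb F N l (int y))
      + l * (\<Sum>x<N. \<Sum>y<N. \<pi> x y * c x y) / 2"
  proof -
    have "(\<Sum>x<N. \<Sum>y<N. \<pi> x y * (Gf (f x) - Gf (f y) - l * c x y / 2))
       \<le> (\<Sum>x<N. \<Sum>y<N. \<pi> x y * Tb F N l (int y))"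
      using pi0 pair_bound[OF _ _ l, of _ N _ f] unfolding F_def c_def
      by (intro sum_mono mult_left_mono) auto
    then show ?thesis by simp
  qed
  also have "(\<Sum>x<N. \<Sum>y<N. \<pi> x y * Tb F N l (int y)) = (\<Sum>y<N. Tb F N l (int y)) / real N"
    by (subst sum.swap) (simp add: m2 sum_distrib_right[symmetric] sum_divide_distrib)
  also have "(\<Sum>y<N. Tb F N l (int y)) \<le> (\<Sum>z<N. (F (int z + 1) - F (int z))^2) / (2 * l)"
    by (rule sum_Tb) (simp_all add: F_def ext_periodic l)
  also have "(\<Sum>z<N. (F (int z + 1) - F (int z))^2) \<le> real N * Is"
  proof -
    have "(\<Sum>z<N. (F (int z + 1) - F (int z))^2) \<le>
          (\<Sum>z<N. real N * ((ln (\<nu> ((z + 1) mod N)) - ln (\<nu> z)) * (\<nu> ((z + 1) mod N) - \<nu> z)))"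
    proof (rule sum_mono)
      fix z assume "z \<in> {..<N}"
      then have z: "z < N" by simp
      have z1: "(z + 1) mod N < N" using N1 by simp
      have "(F (int z + 1) - F (int z))^2 = (Gf (f ((z + 1) mod N)) - Gf (f z))^2"
        using z by (simp add: F_def ext_suc ext_nat)
      also have "\<dots> \<le> (ln (f ((z + 1) mod N)) - ln (f z)) * (f ((z + 1) mod N) - f z)"
        using fpos[OF z1] fpos[OF z] by (rule Gf_sq)
      also have "\<dots> = real N * ((ln (\<nu> ((z + 1) mod N)) - ln (\<nu> z)) * (\<nu> ((z + 1) mod N) - \<nu> z))"
        using Npos pos[OF z] pos[OF z1] by (simp add: f_def ln_mult algebra_simps)
      finally show "(F (int z + 1) - F (int z))^2 \<le> real N * ((ln (\<nu> ((z + 1) mod N)) - ln (\<nu> z)) * (\<nu> ((z + 1) mod N) - \<nu> z))" .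
    qed
    then show ?thesis by (simp add: Is_def sum_distrib_left)
  qed
  finally have "rel_entropy N \<nu> \<le> real N * Is / (2 * l) / real N + l * (\<Sum>x<N. \<Sum>y<N. \<pi> x y * c x y) / 2"
    using l Npos by (simp add: divide_right_mono)
  then show ?thesis using IsEq Npos by (simp add: c_def)
qed


lemma opt_lambda:
  fixes H I C :: real
  assumes h: "\<And>l. 0 < l \<Longrightarrow> H \<le> I / (2 * l) + l * C / 2" and I0: "0 \<le> I" and C0: "0 \<le> C"
  shows "H \<le> sqrt (C * I)"
proof (cases "0 < C \<and> 0 < I")
  case True
  define l where "l = sqrt I / sqrt C"
  have lp: "0 < l" using True by (simp add: l_def)
  have sI: "sqrt I * sqrt I = I" and sC: "sqrt C * sqrt C = C" using True by simp_all
  have "I / (2 * l) = sqrt I * sqrt C / 2" using True sI by (simp add: l_def field_simps)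
  moreover have "l * C / 2 = sqrt I * sqrt C / 2" using True sC by (simp add: l_def field_simps)
  ultimately have "H \<le> sqrt I * sqrt C" using h[OF lp] by simp
  then show ?thesis by (simp add: real_sqrt_mult mult.commute)
next
  case False
  have "H \<le> 0"
  proof (rule ccontr)
    assume "\<not> H \<le> 0"
    then have Hp: "0 < H" by simp
    show False
    proof (cases "C = 0")
      case True
      show False
      proof (cases "I = 0")
        case True
        then show False using h[of 1] \<open>C = 0\<close> Hp by simp
      next
        case False
        then have Ip: "0 < I" using I0 by simp
        have "H \<le> I / (2 * (I / H)) + (I / H) * C / 2" using h[of "I / H"] Ip Hp by simp
        then show False using True Ip Hp by (simp add: field_simps)
      qed
    next
      case False
      then have Cp: "0 < C" using C0 by simp
      then have "I = 0" using \<open>\<not> (0 < C \<and> 0 < I)\<close> I0 by simp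
      have "H \<le> I / (2 * (H / C)) + (H / C) * C / 2" using h[of "H / C"] Cp Hp by simp
      then show False using \<open>I = 0\<close> Cp Hp by (simp add: field_simps)
    qed
  qed
  then show ?thesis using C0 I0 by (meson order_trans real_sqrt_ge_zero zero_le_mult_iff)
qed

lemma all_pos:
  fixes \<nu> :: "nat \<Rightarrow> real"
  assumes N1: "N \<ge> 1" and p: "is_prob N \<nu>"
    and nz: "\<not> (\<exists>x<N. (\<nu> x = 0) \<noteq> (\<nu> ((x + 1) mod N) = 0))"
  shows "\<And>x. x < N \<Longrightarrow> 0 < \<nu> x"
proof -
  have nn: "x < N \<Longrightarrow> 0 \<le> \<nu> x" for x using p by (simp add: is_prob_def)
  have step: "x < N \<Longrightarrow> \<nu> x = 0 \<Longrightarrow> \<nu> ((x + 1) mod N) = 0" for x using nz by blast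
  have nonz: "\<nu> x \<noteq> 0" if x: "x < N" for x
  proof
    assume z: "\<nu> x = 0"
    have all: "\<nu> ((x + k) mod N) = 0" for k
    proof (induction k)
      case 0 then show ?case using z x by simp
    next
      case (Suc k)
      have "(x + Suc k) mod N = ((x + k) mod N + 1) mod N" by (simp add: mod_Suc_eq)
      moreover have "(x + k) mod N < N" using N1 by simp
      ultimately show ?case using step Suc by simp
    qed
    have "\<nu> y = 0" if y: "y < N" for y
    proof -
      have "(x + (y + N - x)) mod N = y" using x y by simp
      then show ?thesis using all[of "y + N - x"] by simp
    qed
    then have "(\<Sum>y<N. \<nu> y) = 0" by simp
    then show False using p by (simp add: is_prob_def)
  qed
  fix x assume "x < N"
  then show "0 < \<nu> x" using nn nonz by (simp add: less_le)
qed


theorem mainTheorem2: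
  fixes N :: nat and \<nu> :: "nat \<Rightarrow> real"
  assumes "N \<ge> 1" and "is_prob N \<nu>"
  shows "ereal (rel_entropy N \<nu>) \<le>
           (if fisher_info N \<nu> = \<infinity> then \<infinity>
            else ereal (sqrt 2 * Wc N \<nu> * sqrt (real_of_ereal (fisher_info N \<nu>))))"
proof (cases "fisher_info N \<nu> = \<infinity>")
  case True then show ?thesis by simp
next
  case False
  note N1 = assms(1)
  have nz: "\<not> (\<exists>x<N. (\<nu> x = 0) \<noteq> (\<nu> ((x + 1) mod N) = 0))"
  proof
    assume "\<exists>x<N. (\<nu> x = 0) \<noteq> (\<nu> ((x + 1) mod N) = 0)"
    then have "fisher_info N \<nu> = \<infinity>" unfolding fisher_info_def by (rule if_P)
    then show False using False by simp
  qed
  have pos: "\<And>x. x < N \<Longrightarrow> 0 < \<nu> x" by (rule all_pos[OF N1 assms(2) nz])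
  define I where "I = (\<Sum>x<N. if \<nu> x = 0 then 0 else
              (ln (\<nu> ((x + 1) mod N)) - ln (\<nu> x)) * (\<nu> ((x + 1) mod N) - \<nu> x))"
  have FI: "fisher_info N \<nu> = ereal I" unfolding fisher_info_def I_def using nz by (rule if_not_P)
  define Cst where "Cst \<pi> = (\<Sum>x<N. \<Sum>y<N. \<pi> x y *
        (real (torus_dist N x y) + real (torus_dist N x y) ^ 2))" for \<pi> :: "nat \<Rightarrow> nat \<Rightarrow> real"
  define S where "S = {Cst \<pi> | \<pi>. is_coupling N \<nu> \<pi>}"
  have WcS: "Wc N \<nu> = sqrt (Inf S)" by (simp add: Wc_def S_def Cst_def)
  define H where "H = rel_entropy N \<nu>"
  have Npos: "0 < real N" using N1 by simp
  have I0: "0 \<le> I"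
    unfolding I_def
  proof (rule sum_nonneg)
    fix x assume "x \<in> {..<N}"
    then have x: "x < N" by simp
    have x1: "(x + 1) mod N < N" using N1 by simp
    have a: "0 < \<nu> x" "0 < \<nu> ((x + 1) mod N)" using pos x x1 by auto
    have "0 \<le> (ln (\<nu> ((x + 1) mod N)) - ln (\<nu> x)) * (\<nu> ((x + 1) mod N) - \<nu> x)"
    proof (cases "\<nu> x \<le> \<nu> ((x + 1) mod N)")
      case True
      then have "ln (\<nu> x) \<le> ln (\<nu> ((x + 1) mod N))" using a by simp
      then show ?thesis using True by simp
    next
      case False
      then have "ln (\<nu> ((x + 1) mod N)) \<le> ln (\<nu> x)" using a by simp
      then show ?thesis using False by (simp add: mult_nonpos_nonpos)
    qed
    then show "0 \<le> (if \<nu> x = 0 then 0 else (ln (\<nu> ((x + 1) mod N)) - ln (\<nu> x)) * (\<nu> ((x + 1) mod N) - \<nu> x))"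
      by simp
  qed
  have C0: "is_coupling N \<nu> \<pi> \<Longrightarrow> 0 \<le> Cst \<pi>" for \<pi>
    unfolding Cst_def is_coupling_def by (intro sum_nonneg mult_nonneg_nonneg) auto
  have key: "is_coupling N \<nu> \<pi> \<Longrightarrow> H \<le> sqrt (Cst \<pi> * I)" for \<pi>
  proof -
    assume cp: "is_coupling N \<nu> \<pi>"
    show ?thesis
    proof (rule opt_lambda[OF _ I0 C0[OF cp]])
      fix l :: real assume "0 < l"
      then show "H \<le> I / (2 * l) + l * Cst \<pi> / 2"
        using per_lambda[OF N1 pos cp] unfolding H_def I_def Cst_def by blast
    qed
  qed
  define \<pi>0 where "\<pi>0 x y = \<nu> x / real N" for x y :: nat
  have cp0: "is_coupling N \<nu> \<pi>0"
    unfolding is_coupling_def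
  proof (intro conjI allI impI)
    fix x y assume "x < N" "y < N"
    then show "0 \<le> \<pi>0 x y" using pos Npos by (simp add: \<pi>0_def less_imp_le)
  next
    fix x assume "x < N"
    show "(\<Sum>y<N. \<pi>0 x y) = \<nu> x" using Npos by (simp add: \<pi>0_def)
  next
    fix y assume "y < N"
    have "(\<Sum>x<N. \<pi>0 x y) = (\<Sum>x<N. \<nu> x) / real N" by (simp add: \<pi>0_def sum_divide_distrib)
    then show "(\<Sum>x<N. \<pi>0 x y) = 1 / real N" using assms(2) by (simp add: is_prob_def)
  qed
  have Sne: "S \<noteq> {}" using cp0 by (auto simp: S_def)
  have Sbdd: "\<And>s. s \<in> S \<Longrightarrow> 0 \<le> s" using C0 by (auto simp: S_def)
  have Inf0: "0 \<le> Inf S" using Sne Sbdd by (intro cInf_greatest) auto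
  have main: "H \<le> sqrt (Inf S * I)"
  proof (cases "H \<le> 0")
    case True
    have "0 \<le> Inf S * I" using Inf0 I0 by simp
    then have "0 \<le> sqrt (Inf S * I)" by simp
    then show ?thesis using True by linarith
  next
    case False
    then have Hp: "0 < H" by simp
    have Ip: "0 < I"
    proof (rule ccontr)
      assume "\<not> 0 < I" then have "I = 0" using I0 by simp
      then show False using key[OF cp0] Hp by simp
    qed
    have "H^2 / I \<le> Inf S"
    proof (rule cInf_greatest[OF Sne])
      fix s assume "s \<in> S"
      then obtain \<pi> where cp: "is_coupling N \<nu> \<pi>" and s: "s = Cst \<pi>" by (auto simp: S_def)
      have "H \<le> sqrt (s * I)" using key[OF cp] s by simp
      moreover have "0 \<le> s * I" using C0[OF cp] I0 s by simp
      ultimately have "H^2 \<le> (sqrt (s * I))^2" using Hp by (intro power_mono) auto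
      then have "H^2 \<le> s * I" using \<open>0 \<le> s * I\<close> by simp
      then show "H^2 / I \<le> s" using Ip by (simp add: divide_le_eq)
    qed
    then have "H^2 \<le> Inf S * I" using Ip by (simp add: divide_le_eq)
    then show ?thesis using Hp by (simp add: real_le_rsqrt)
  qed
  have "sqrt (Inf S * I) \<le> sqrt 2 * sqrt (Inf S) * sqrt I"
  proof -
    have "sqrt (Inf S * I) = 1 * (sqrt (Inf S) * sqrt I)" by (simp add: real_sqrt_mult)
    also have "\<dots> \<le> sqrt 2 * (sqrt (Inf S) * sqrt I)"
      using Inf0 I0 by (intro mult_right_mono) auto
    finally show ?thesis by (simp add: mult.assoc)
  qed
  then have "H \<le> sqrt 2 * Wc N \<nu> * sqrt I" using main WcS by simp
  then show ?thesis using False FI by (simp add: H_def)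
qed

end
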